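(* Let $L\ge1$ be an integer, $\gamma\in(0,1)$, $r\in[0,\frac{L}{L+1})$ and $n\in\mathbb{N}$ with $rn\in\mathbb{N}$. There exists $q(n,r,L,\gamma)$ such that for every $q\ge q(n,r,L,\gamma)$ the following holds: if $\epsilon\ge0$ is an integer with $(L-1)(\epsilon+1)\le\lfloor rn/L\rfloor$ and $C\subseteq[q]^n$ is an $(r,L)$ list-decodable code with $|C|=q^{\,n-\lfloor\frac{L+1}{L}rn\rfloor-\epsilon}$, then $C$ contains a subcode $C'\subseteq C$ with $|C'|\ge\gamma|C|$ and minimum distance at least $\lfloor\frac{L+1}{L}rn\rfloor-(L-1)(\epsilon+1)+1$.
   Context: $[q]=\{1,\dots,q\}$; a code is a subset of $[q]^n$, its minimum distance is the minimum Hamming distance (number of differing coordinates) between distinct codewords. $C$ is $(r,L)$ list-decodable if every Hamming ball of radius $rn$ in $[q]^n$ contains at most $L$ codewords. *)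

theory Defs
  imports Complex_Main
begin

definition words :: "nat \<Rightarrow> nat \<Rightarrow> nat list set" where
  "words q n = {xs. length xs = n \<and> set xs \<subseteq> {1..q}}"

definition hdist :: "nat list \<Rightarrow> nat list \<Rightarrow> nat" where
  "hdist x y = card {i. i < length x \<and> x ! i \<noteq> y ! i}"

definition list_decodable :: "nat \<Rightarrow> nat \<Rightarrow> real \<Rightarrow> nat \<Rightarrow> nat list set \<Rightarrow> bool" where
  "list_decodable q n r L C \<longleftrightarrow>
     (\<forall>y \<in> words q n. card {c \<in> C. real (hdist c y) \<le> r * real n} \<le> L)"

definition min_dist_ge :: "nat list set \<Rightarrow> int \<Rightarrow> bool" where
  "min_dist_ge C d \<longleftrightarrow> (\<forall>x \<in> C. \<forall>y \<in> C. x \<noteq> y \<longrightarrow> int (hdist x y) \<ge> d)"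

end

theory Submission
  imports Defs "HOL-Library.FuncSet"
begin


definition cls :: "nat list set \<Rightarrow> nat set \<Rightarrow> nat list \<Rightarrow> nat list set" where
  "cls C S c = {x\<in>C. \<forall>i\<in>S. x!i = c!i}"

lemma fiber_count:
  assumes fin: "finite C" and CW: "C \<subseteq> words q n" and Sn: "S \<subseteq> {..<n}"
  shows "card {c\<in>C. card (cls C S c) \<le> L} \<le> L * q ^ card S"
proof -
  define A where "A = {c\<in>C. card (cls C S c) \<le> L}"
  define f where "f c = restrict (\<lambda>i. c!i) S" for c :: "nat list"
  have finS: "finite S" using Sn finite_subset by blast
  have finA: "finite A" using fin unfolding A_def by simp
  have A_eq: "A = (\<Union>v\<in>f`A. {c\<in>A. f c = v})" by auto
  have "card A \<le> (\<Sum>v\<in>f`A. card {c\<in>A. f c = v})"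
    by (subst A_eq) (rule card_UN_le, simp add: finA)
  also have "\<dots> \<le> (\<Sum>v\<in>f`A. L)"
  proof (rule sum_mono)
    fix v assume "v \<in> f`A"
    then obtain c0 where c0: "c0 \<in> A" "v = f c0" by auto
    have "{c\<in>A. f c = v} \<subseteq> cls C S c0"
    proof
      fix c assume "c \<in> {c\<in>A. f c = v}"
      then have "c \<in> C" "f c = f c0" using c0 by (auto simp: A_def)
      moreover have "\<forall>i\<in>S. c!i = f c i" "\<forall>i\<in>S. c0!i = f c0 i" by (simp_all add: f_def)
      ultimately show "c \<in> cls C S c0" unfolding cls_def by auto
    qed
    moreover have "finite (cls C S c0)" using fin unfolding cls_def by simp
    ultimately have "card {c\<in>A. f c = v} \<le> card (cls C S c0)" by (simp add: card_mono)
    also have "\<dots> \<le> L" using c0 by (simp add: A_def)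
    finally show "card {c\<in>A. f c = v} \<le> L" .
  qed
  also have "\<dots> = card (f`A) * L" by simp
  also have "card (f`A) \<le> card (PiE S (\<lambda>_. {1..q}))"
  proof (rule card_mono)
    show "finite (PiE S (\<lambda>_. {1..q}))" using finS by (simp add: finite_PiE)
    show "f`A \<subseteq> PiE S (\<lambda>_. {1..q})"
    proof
      fix v assume "v \<in> f`A"
      then obtain c where c: "c \<in> C" "v = f c" by (auto simp: A_def)
      then have "length c = n" "set c \<subseteq> {1..q}" using CW by (auto simp: words_def)
      then have "\<forall>i\<in>S. c!i \<in> {1..q}" using Sn by (meson lessThan_iff nth_mem subsetD)
      then show "v \<in> PiE S (\<lambda>_. {1..q})" using c by (simp add: f_def)
    qed
  qed
  also have "card (PiE S (\<lambda>_. {1..q})) = q ^ card S" using finS by (simp add: card_PiE)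
  finally show ?thesis unfolding A_def by (simp add: mult.commute)
qed



lemma core:
  fixes C :: "nat list set" and q n L t u w :: nat and c c' :: "nat list"
  assumes CW: "C \<subseteq> words q n" and fin: "finite C" and L1: "L \<ge> 1"
    and ld: "\<forall>y\<in>words q n. card {x\<in>C. hdist x y \<le> t} \<le> L"
    and u: "u = t div L" and pw: "(L-1)*w \<le> u" and w1: "w \<ge> 1" and nbig: "t + u + w \<le> n"
    and good: "\<forall>S. S \<subseteq> {..<n} \<and> card S = n - (t+u+w) \<longrightarrow> L + 1 \<le> card (cls C S c)"
    and cC: "c \<in> C" and c'C: "c' \<in> C" and cc': "c \<noteq> c'"
    and dcc: "hdist c c' \<le> t + u - (L-1)*w"
  shows False
proof -
  have lenC: "\<And>x. x \<in> C \<Longrightarrow> length x = n" and setC: "\<And>x. x \<in> C \<Longrightarrow> set x \<subseteq> {1..q}"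
    using CW by (auto simp: words_def)
  define B where "B = {i. i < n \<and> c!i \<noteq> c'!i}"
  define b where "b = card B"
  have b_eq: "b = hdist c c'" using lenC[OF cC] by (simp add: b_def B_def hdist_def)
  have Bsub: "B \<subseteq> {..<n}" by (auto simp: B_def)
  have finB: "finite B" using Bsub finite_subset by blast
  define ps where "ps = sorted_list_of_set B @ sorted_list_of_set ({..<n} - B)"
  have sB: "set (sorted_list_of_set B) = B" using finB by simp
  have sB2: "set (sorted_list_of_set ({..<n} - B)) = {..<n} - B" by simp
  have dps: "distinct ps" unfolding ps_def using sB sB2 by auto
  have sps: "set ps = {..<n}" unfolding ps_def using Bsub by (simp only: set_append sB sB2) blast
  have lps: "length ps = n" using distinct_card[OF dps] sps by simp
  have psB: "\<And>k. k < b \<Longrightarrow> ps!k \<in> B"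
    unfolding ps_def b_def using finB sB by (metis length_sorted_list_of_set nth_append nth_mem)
  have psnB: "\<And>k. b \<le> k \<Longrightarrow> k < n \<Longrightarrow> ps!k \<notin> B"
  proof -
    fix k assume "b \<le> k" "k < n"
    then have "ps!k = sorted_list_of_set ({..<n} - B) ! (k - b)"
      unfolding ps_def b_def using finB by (simp add: nth_append)
    moreover have "k - b < length (sorted_list_of_set ({..<n} - B))"
      using lps `k < n` `b \<le> k` unfolding ps_def b_def using finB by simp
    ultimately have "ps!k \<in> {..<n} - B" by (metis nth_mem set_sorted_list_of_set finite_Diff finite_lessThan)
    then show "ps!k \<notin> B" by simp
  qed
  have psn: "\<And>k. k < n \<Longrightarrow> ps!k < n" using sps lps nth_mem by fastforce
  have injps: "inj_on (nth ps) {..<n}" using dps lps by (simp add: inj_on_nth)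
  have agree: "\<And>k. b \<le> k \<Longrightarrow> k < n \<Longrightarrow> c!(ps!k) = c'!(ps!k)"
    using psnB psn unfolding B_def by auto
  define s where "s = t + u"
  have Lu: "L * u \<le> t" unfolding u by (metis div_times_less_eq_dividend mult.commute)
  define e where "e = (L-1)*(u+w)"
  have e_le: "e \<le> t"
  proof -
    have "e = (L-1)*u + (L-1)*w" unfolding e_def by (rule distrib_left)
    also have "\<dots> \<le> (L-1)*u + u" using pw by simp
    also have "\<dots> = L*u" using L1 by (cases L) auto
    finally show ?thesis using Lu by simp
  qed
  have be: "b + e \<le> 2*t"
  proof -
    have e2: "e = (L-1)*u + (L-1)*w" unfolding e_def by (rule distrib_left)
    have "b + e \<le> t + u - (L-1)*w + ((L-1)*u + (L-1)*w)" using dcc b_eq e2 by simp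
    also have "\<dots> = t + u + (L-1)*u" using pw by simp
    also have "\<dots> = t + L*u" using L1 by (cases L) auto
    finally show ?thesis using Lu by simp
  qed
  have b_le: "b \<le> s + w" using dcc b_eq by (simp add: s_def)
  define S where "S = nth ps ` {s+w..<n}"
  have Ssub: "S \<subseteq> {..<n}" using psn by (auto simp: S_def)
  have cardS: "card S = n - (t+u+w)"
    unfolding S_def s_def by (subst card_image) (auto intro: inj_on_subset[OF injps])
  have clsbig: "L + 1 \<le> card (cls C S c)" using good Ssub cardS by blast
  define X0 where "X0 = cls C S c - {c, c'}"
  have finX0: "finite X0" using fin by (simp add: X0_def cls_def)
  have finCls: "finite (cls C S c)" using fin by (simp add: cls_def)
  have "card (cls C S c) \<le> card X0 + card {c,c'}"
    unfolding X0_def by (metis card_Un_le Un_Diff_cancel2 le_trans card_mono finCls finite.insertI finite.emptyI finite_Un sup_ge1 finX0 X0_def)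
  then have cX0: "L - 1 \<le> card X0" using clsbig card_2_iff' cc' by (simp add: card_insert_if)
  obtain X where X: "X \<subseteq> X0" "card X = L - 1" using obtain_subset_with_card_n[OF cX0] by blast
  have finX: "finite X" using X finX0 finite_subset by blast
  obtain g where g: "bij_betw g {0..<L-1} X" using ex_bij_betw_nat_finite[OF finX] X by auto
  have gC: "\<And>j. j < L-1 \<Longrightarrow> g j \<in> C \<and> g j \<noteq> c \<and> g j \<noteq> c' \<and> (\<forall>i\<in>S. g j ! i = c ! i)"
  proof -
    fix j assume "j < L-1"
    then have "g j \<in> X0" using g X bij_betwE by fastforce
    then show "g j \<in> C \<and> g j \<noteq> c \<and> g j \<noteq> c' \<and> (\<forall>i\<in>S. g j ! i = c ! i)"
      by (auto simp: X0_def cls_def)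
  qed
  have gagree: "\<And>j k. j < L-1 \<Longrightarrow> s + w \<le> k \<Longrightarrow> k < n \<Longrightarrow> g j ! (ps!k) = c!(ps!k)"
    using gC unfolding S_def by auto
  define Y where "Y k = (if k < e then g (k div (u+w)) ! (ps!k) else if k < t then c!(ps!k) else c'!(ps!k))" for k
  define \<tau> where "\<tau> = the_inv_into {..<n} (nth ps)"
  define y where "y = map (\<lambda>i. Y (\<tau> i)) [0..<n]"
  have leny: "length y = n" by (simp add: y_def)
  have yps: "\<And>k. k < n \<Longrightarrow> y!(ps!k) = Y k"
    using psn injps by (simp add: y_def \<tau>_def the_inv_into_f_f)
  have Yrange: "\<And>k. k < n \<Longrightarrow> Y k \<in> {1..q}"
  proof -
    fix k assume k: "k < n"
    have "\<And>x. x \<in> C \<Longrightarrow> x!(ps!k) \<in> {1..q}" using lenC setC psn[OF k] nth_mem by blast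
    moreover have "k < e \<Longrightarrow> k div (u+w) < L - 1"
      using w1 by (simp add: e_def less_mult_imp_div_less)
    ultimately show "Y k \<in> {1..q}" unfolding Y_def using gC cC c'C by auto
  qed
  have yW: "y \<in> words q n"
  proof -
    have "\<And>i. i < n \<Longrightarrow> y!i \<in> {1..q}"
    proof -
      fix i assume "i < n"
      then obtain k where "k < n" "i = ps!k" using sps lps by (metis in_set_conv_nth lessThan_iff)
      then show "y!i \<in> {1..q}" using yps Yrange by simp
    qed
    then show ?thesis using leny by (auto simp: words_def in_set_conv_nth)
  qed
  have hd: "\<And>x. length x = n \<Longrightarrow> hdist x y = card {k. k < n \<and> x!(ps!k) \<noteq> Y k}"
  proof -
    fix x :: "nat list" assume lx: "length x = n"
    have "{i. i < length x \<and> x!i \<noteq> y!i} = nth ps ` {k. k < n \<and> x!(ps!k) \<noteq> Y k}"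
    proof
      show "{i. i < length x \<and> x!i \<noteq> y!i} \<subseteq> nth ps ` {k. k < n \<and> x!(ps!k) \<noteq> Y k}"
      proof
        fix i assume "i \<in> {i. i < length x \<and> x!i \<noteq> y!i}"
        then have i: "i < n" "x!i \<noteq> y!i" using lx by auto
        then obtain k where "k < n" "i = ps!k" using sps lps by (metis in_set_conv_nth lessThan_iff)
        then show "i \<in> nth ps ` {k. k < n \<and> x!(ps!k) \<noteq> Y k}" using i yps by auto
      qed
      show "nth ps ` {k. k < n \<and> x!(ps!k) \<noteq> Y k} \<subseteq> {i. i < length x \<and> x!i \<noteq> y!i}"
        using lx psn yps by auto
    qed
    then show "hdist x y = card {k. k < n \<and> x!(ps!k) \<noteq> Y k}"
      unfolding hdist_def by (simp add: card_image inj_on_subset[OF injps, of "{k. k < n \<and> x!(ps!k) \<noteq> Y k}"] subset_eq)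
  qed
  have dc: "hdist c y \<le> t"
  proof -
    have "{k. k < n \<and> c!(ps!k) \<noteq> Y k} \<subseteq> {..<e} \<union> {t..<b}"
      using agree unfolding Y_def by (auto simp: not_less)
    then have "card {k. k < n \<and> c!(ps!k) \<noteq> Y k} \<le> card ({..<e} \<union> {t..<b})"
      by (simp add: card_mono)
    also have "\<dots> \<le> e + (b - t)" using card_Un_le[of "{..<e}" "{t..<b}"] by simp
    also have "\<dots> \<le> t" using be e_le by simp
    finally show ?thesis using hd lenC cC by simp
  qed
  have dc': "hdist c' y \<le> t"
  proof -
    have "{k. k < n \<and> c'!(ps!k) \<noteq> Y k} \<subseteq> {..<t}"
      using e_le unfolding Y_def by (auto simp: not_less)
    then have "card {k. k < n \<and> c'!(ps!k) \<noteq> Y k} \<le> t"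
      using card_mono[of "{..<t}"] by fastforce
    then show ?thesis using hd lenC c'C by simp
  qed
  have dg: "\<And>j. j < L-1 \<Longrightarrow> hdist (g j) y \<le> t"
  proof -
    fix j assume j: "j < L-1"
    have blk: "(j+1)*(u+w) \<le> e" using j unfolding e_def by (intro mult_right_mono) auto
    have "{k. k < n \<and> g j!(ps!k) \<noteq> Y k} \<subseteq> {..<s+w} - {j*(u+w)..<(j+1)*(u+w)}"
    proof
      fix k assume k: "k \<in> {k. k < n \<and> g j!(ps!k) \<noteq> Y k}"
      have "k < s + w"
      proof (rule ccontr)
        assume "\<not> k < s + w"
        then have "s + w \<le> k" "t \<le> k" "e \<le> k" "b \<le> k" using e_le b_le by (auto simp: s_def)
        then have "Y k = c'!(ps!k)" by (simp add: Y_def)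
        also have "\<dots> = c!(ps!k)" using agree `b \<le> k` k by simp
        also have "\<dots> = g j!(ps!k)" using gagree j `s + w \<le> k` k by simp
        finally show False using k by simp
      qed
      moreover have "k \<notin> {j*(u+w)..<(j+1)*(u+w)}"
      proof
        assume kb: "k \<in> {j*(u+w)..<(j+1)*(u+w)}"
        then have "k < e" using blk by simp
        moreover have "k div (u+w) = j" using kb w1
          by (metis atLeastLessThan_iff add.commute div_nat_eqI mult.commute mult_Suc plus_1_eq_Suc)
        ultimately have "Y k = g j!(ps!k)" by (simp add: Y_def)
        then show False using k by simp
      qed
      ultimately show "k \<in> {..<s+w} - {j*(u+w)..<(j+1)*(u+w)}" by simp
    qed
    then have "card {k. k < n \<and> g j!(ps!k) \<noteq> Y k} \<le> card ({..<s+w} - {j*(u+w)..<(j+1)*(u+w)})"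
      by (simp add: card_mono)
    also have "\<dots> = (s+w) - (u+w)"
    proof -
      have "{j*(u+w)..<(j+1)*(u+w)} \<subseteq> {..<s+w}" using blk e_le by (auto simp: s_def)
      then show ?thesis by (simp add: card_Diff_subset)
    qed
    also have "\<dots> = t" by (simp add: s_def)
    finally show "hdist (g j) y \<le> t" using hd lenC gC j by simp
  qed
  define Z where "Z = insert c (insert c' (g ` {0..<L-1}))"
  have "Z \<subseteq> {x\<in>C. hdist x y \<le> t}"
    unfolding Z_def using cC c'C dc dc' dg gC by auto
  then have "card Z \<le> card {x\<in>C. hdist x y \<le> t}" using fin by (simp add: card_mono)
  also have "\<dots> \<le> L" using ld yW by blast
  finally have cZ: "card Z \<le> L" .
  have "card (g ` {0..<L-1}) = L - 1" using g X by (simp add: bij_betw_def card_image)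
  moreover have "c \<notin> g ` {0..<L-1}" "c' \<notin> g ` {0..<L-1}" using gC by (metis atLeastLessThan_iff imageE)+
  ultimately have "card Z = L + 1" unfolding Z_def using cc' L1 by (simp add: card_insert_if)
  then show False using cZ by simp
qed



lemma finite_words: "finite (words q n)"
proof -
  have "words q n = {xs. set xs \<subseteq> {1..q} \<and> length xs = n}" by (auto simp: words_def)
  then show ?thesis using finite_lists_length_eq[of "{1..q}" n] by simp
qed

theorem theorem6p1:
  fixes L n :: nat and \<gamma> r :: real
  assumes "L \<ge> 1" and "0 < \<gamma>" and "\<gamma> < 1"
    and "0 \<le> r" and "r < real L / real (L + 1)"
    and "r * real n \<in> \<nat>"
  shows "\<exists>q0::nat. \<forall>q \<ge> q0. \<forall>(\<epsilon>::nat) (C::nat list set).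
           int ((L - 1) * (\<epsilon> + 1)) \<le> \<lfloor>r * real n / real L\<rfloor>
           \<longrightarrow> C \<subseteq> words q n
           \<longrightarrow> list_decodable q n r L C
           \<longrightarrow> real (card C) = real q powi (int n - \<lfloor>real (L + 1) / real L * (r * real n)\<rfloor> - int \<epsilon>)
           \<longrightarrow> (\<exists>C' \<subseteq> C. real (card C') \<ge> \<gamma> * real (card C) \<and>
                  min_dist_ge C' (\<lfloor>real (L + 1) / real L * (r * real n)\<rfloor> - int ((L - 1) * (\<epsilon> + 1)) + 1))"
proof -
  have L1: "L \<ge> 1" and g0: "0 < \<gamma>" and g1: "\<gamma> < 1" using assms by auto
  obtain t where rt: "r * real n = real t" using assms(6) by (metis Nats_cases)
  define u where "u = t div L"
  have Lpos: "real L > 0" using L1 by simp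
  have fl1: "\<lfloor>real (L + 1) / real L * (r * real n)\<rfloor> = int (t + u)"
  proof -
    have "real (L + 1) / real L * (r * real n) = real t / real L + of_int (int t)"
      using Lpos by (simp add: rt field_simps)
    moreover have "\<lfloor>real t / real L + of_int (int t)\<rfloor> = \<lfloor>real t / real L\<rfloor> + int t"
      by (rule floor_add_int[symmetric])
    ultimately have "\<lfloor>real (L + 1) / real L * (r * real n)\<rfloor> = \<lfloor>real t / real L\<rfloor> + int t"
      by (simp only:)
    also have "\<lfloor>real t / real L\<rfloor> = int u" unfolding u_def by (rule floor_divide_of_nat_eq)
    finally show ?thesis by simp
  qed
  have fl2: "\<lfloor>r * real n / real L\<rfloor> = int u"
    unfolding rt u_def by (rule floor_divide_of_nat_eq)
  define q0 where "q0 = nat \<lceil>2^n * real L / (1-\<gamma>)\<rceil> + 2"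
  show ?thesis
  proof (rule exI[of _ q0], intro allI impI)
    fix q \<epsilon> and C :: "nat list set"
    assume q: "q0 \<le> q"
      and H1: "int ((L - 1) * (\<epsilon> + 1)) \<le> \<lfloor>r * real n / real L\<rfloor>"
      and CW: "C \<subseteq> words q n" and LD: "list_decodable q n r L C"
      and cardC: "real (card C) = real q powi (int n - \<lfloor>real (L + 1) / real L * (r * real n)\<rfloor> - int \<epsilon>)"
    define w where "w = \<epsilon> + 1"
    have w1: "w \<ge> 1" by (simp add: w_def)
    have "int ((L-1)*w) \<le> int u" using H1 fl2 by (simp only: w_def)
    then have pw: "(L-1)*w \<le> u" by (simp only: of_nat_le_iff)
    have q2: "q \<ge> 2" using q by (simp add: q0_def)
    have qbig: "real q \<ge> 2^n * real L / (1-\<gamma>)"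
    proof -
      have "2^n * real L / (1-\<gamma>) \<le> real (nat \<lceil>2^n * real L / (1-\<gamma>)\<rceil>)" by (rule real_nat_ceiling_ge)
      also have "\<dots> \<le> real q"
      proof -
        have "nat \<lceil>2^n * real L / (1-\<gamma>)\<rceil> \<le> q" using q unfolding q0_def by linarith
        then show ?thesis by (simp only: of_nat_le_iff)
      qed
      finally show ?thesis .
    qed
    have qbig2: "2^n * real L \<le> (1-\<gamma>) * real q"
      using qbig g1 by (simp add: pos_divide_le_eq mult.commute)
    have fin: "finite C" using CW finite_words finite_subset by blast
    have ld: "\<forall>y\<in>words q n. card {x\<in>C. hdist x y \<le> t} \<le> L"
    proof
      fix y assume "y \<in> words q n"
      then have "card {c \<in> C. real (hdist c y) \<le> r * real n} \<le> L" using LD by (simp add: list_decodable_def)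
      moreover have "{c \<in> C. real (hdist c y) \<le> r * real n} = {x\<in>C. hdist x y \<le> t}" using rt by simp
      ultimately show "card {x\<in>C. hdist x y \<le> t} \<le> L" by simp
    qed
    have cardC2: "real (card C) = real q powi (int n - int (t + u) - int \<epsilon>)" using cardC fl1 by simp
    show "\<exists>C' \<subseteq> C. real (card C') \<ge> \<gamma> * real (card C) \<and>
                  min_dist_ge C' (\<lfloor>real (L + 1) / real L * (r * real n)\<rfloor> - int ((L - 1) * (\<epsilon> + 1)) + 1)"
    proof (cases "n < t + u + \<epsilon>")
      case True
      define k where "k = t + u + \<epsilon> - n"
      have "int n - int (t + u) - int \<epsilon> = - int k" using True by (simp add: k_def)
      then have "real (card C) = inverse (real q ^ k)" using cardC2 by (simp add: power_int_minus)
      moreover have "k \<ge> 1" using True by (simp add: k_def)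
      moreover have "real q ^ k \<ge> 2"
      proof -
        have "real q ^ 1 \<le> real q ^ k" using q2 \<open>k \<ge> 1\<close> by (intro power_increasing) auto
        then have "real q \<le> real q ^ k" by (simp only: power_one_right)
        moreover have "(2::real) \<le> real q" using q2 by simp
        ultimately show ?thesis by linarith
      qed
      ultimately have "0 < real (card C)" "real (card C) < 1"
        using q2 by (auto simp: inverse_less_1_iff)
      then show ?thesis by simp
    next
      case False
      note nge = False
      show ?thesis
      proof (cases "n = t + u + \<epsilon>")
        case True
        then have "int n - int (t + u) - int \<epsilon> = 0" by simp
        then have "real (card C) = 1" using cardC2 by (simp only: power_int_0_right)
        then have "card C = 1" by simp
        then have "\<exists>x. C = {x}" by (simp add: card_1_singleton_iff)
        then obtain x where Cx: "C = {x}" by (elim exE)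
        show ?thesis
          by (rule exI[of _ C]) (simp add: Cx min_dist_ge_def g1 less_imp_le)
      next
        case False
        define m where "m = n - (t + u + w)"
        have nbig: "t + u + w \<le> n" using False nge by (simp add: w_def)
        have "int n - int (t + u) - int \<epsilon> = int (m + 1)" using nbig unfolding m_def w_def by linarith
        then have cC: "real (card C) = real q ^ (m + 1)" using cardC2 by (simp only: power_int_of_nat)
        define F where "F = {S. S \<subseteq> {..<n} \<and> card S = m}"
        define Bad where "Bad = {c\<in>C. \<exists>S\<in>F. card (cls C S c) \<le> L}"
        have Bad_eq: "Bad = (\<Union>S\<in>F. {c\<in>C. card (cls C S c) \<le> L})" by (auto simp: Bad_def)
        have finF: "finite F" unfolding F_def by (rule finite_subset[of _ "Pow {..<n}"]) auto
        have "card Bad \<le> (\<Sum>S\<in>F. card {c\<in>C. card (cls C S c) \<le> L})"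
          unfolding Bad_eq by (rule card_UN_le[OF finF])
        also have "\<dots> \<le> (\<Sum>S\<in>F. L * q ^ m)"
          by (rule sum_mono) (use fiber_count[OF fin CW] in \<open>auto simp: F_def\<close>)
        also have "\<dots> = card F * (L * q ^ m)" by simp
        also have "\<dots> \<le> 2^n * (L * q ^ m)"
        proof -
          have "card F \<le> card (Pow {..<n})" by (rule card_mono) (auto simp: F_def)
          then show ?thesis by (simp add: card_Pow)
        qed
        finally have cBad: "card Bad \<le> 2^n * (L * q ^ m)" .
        define C' where "C' = C - Bad"
        have "Bad \<subseteq> C" by (auto simp: Bad_def)
        then have cC': "card C' = card C - card Bad" unfolding C'_def using fin by (simp add: card_Diff_subset finite_subset)
        have cBadC: "card Bad \<le> card C" using \<open>Bad \<subseteq> C\<close> fin card_mono by blast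
        have "real (card C') = real (card C) - real (card Bad)" using cC' cBadC by simp
        also have "\<dots> \<ge> real q ^ (m+1) - 2^n * (real L * real q ^ m)"
        proof -
          have "real (card Bad) \<le> real (2^n * (L * q ^ m))" using cBad by (simp only: of_nat_le_iff)
          also have "\<dots> = 2^n * (real L * real q ^ m)" by simp
          finally show ?thesis using cC by linarith
        qed
        finally have A: "real (card C') \<ge> real q ^ (m+1) - 2^n * (real L * real q ^ m)" .
        have "\<gamma> * real (card C) = real q ^ m * (\<gamma> * real q)" using cC by (simp add: algebra_simps)
        also have "\<dots> \<le> real q ^ m * (real q - 2^n * real L)"
          using qbig2 by (intro mult_left_mono) (auto simp: algebra_simps)
        also have "\<dots> = real q ^ (m+1) - 2^n * (real L * real q ^ m)" by (simp add: algebra_simps)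
        finally have size: "\<gamma> * real (card C) \<le> real (card C')" using A by simp
        have md: "min_dist_ge C' (int (t + u) - int ((L - 1) * w) + 1)"
          unfolding min_dist_ge_def
        proof (intro ballI impI)
          fix x y assume x: "x \<in> C'" and y: "y \<in> C'" and xy: "x \<noteq> y"
          show "int (t + u) - int ((L - 1) * w) + 1 \<le> int (hdist x y)"
          proof (rule ccontr)
            assume "\<not> ?thesis"
            then have dxy: "hdist x y \<le> t + u - (L-1)*w" using pw by linarith
            have good: "\<forall>S. S \<subseteq> {..<n} \<and> card S = n - (t+u+w) \<longrightarrow> L + 1 \<le> card (cls C S x)"
              using x unfolding C'_def Bad_def F_def m_def by auto
            show False
              using core[OF CW fin L1 ld u_def pw w1 nbig good _ _ xy dxy] x y by (auto simp: C'_def)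
          qed
        qed
        show ?thesis
          using size md fl1 by (intro exI[of _ C']) (auto simp: C'_def w_def)
      qed
    qed
  qed
qed

end
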